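(* If a problem $\mathbf{f}$ is simple, then $X^{w}(\mathbf{f})=X^*(\mathbf{f})$.
   Context: A problem is a finite set $\mathbf{f}=\{f_1,\dots,f_m\}$ of functions $f_i:\mathbb{R}^n\to\mathbb{R}$ together with a feasible region $X\subseteq\mathbb{R}^n$, to be minimized simultaneously; its evaluation map is $x\mapsto(f_1(x),\dots,f_m(x))$. A subproblem $\mathbf{g}\subseteq\mathbf{f}$ is a subset of these functions (including the empty set and $\mathbf{f}$ itself), with the same $X$; its evaluation map is $x\mapsto(f_i(x))_{f_i\in\mathbf{g}}\in\mathbb{R}^{|\mathbf{g}|}$ (for $\mathbf{g}=\emptyset$ this is the map to the one-point space $\mathbb{R}^0$). For $x,y\in X$, $x$ $\mathbf{g}$-dominates $y$ if $f_i(x)\le f_i(y)$ for all $f_i\in\mathbf{g}$ and $f_j(x)<f_j(y)$ for some $f_j\in\mathbf{g}$. The Pareto set $X^*(\mathbf{g})$ is the set of $x^*\in X$ not $\mathbf{g}$-dominated by any $x\in X$; by convention $X^*(\emptyset)=\emptyset$. The weak Pareto set $X^w(\mathbf{g})$ is the set of $x\in X$ such that for every $y\in X$ there exists $f_i\in\mathbf{g}$ with $f_i(x)\le f_i(y)$. A problem $\mathbf{f}$ is simple if every subproblem $\mathbf{g}\subseteq\mathbf{f}$, say with $k=|\mathbf{g}|$ objectives, satisfies: (S1) $X^*(\mathbf{g})$ is homeomorphic to the standard simplex $\Delta^{k-1}=\{t\in[0,1]^k:\sum t_i=1\}$ (with $\Delta^{-1}=\emptyset$); (S2) the evaluation map of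 $\mathbf{g}$ restricted to $X^*(\mathbf{g})$ is a topological embedding into $\mathbb{R}^k$. All subsets of $\mathbb{R}^n$ and $\mathbb{R}^m$ carry the subspace topology of the Euclidean topology. *)

theory Defs
  imports "HOL-Analysis.Analysis"
begin

text \<open>A problem is a finite set fs of objective functions on R^n together with a
feasible region X.  A subproblem is a subset g of fs.\<close>

definition dominates :: "((real^'n) \<Rightarrow> real) set \<Rightarrow> real^'n \<Rightarrow> real^'n \<Rightarrow> bool" where
  "dominates g x y \<longleftrightarrow> (\<forall>f\<in>g. f x \<le> f y) \<and> (\<exists>f\<in>g. f x < f y)"

definition pareto_set :: "(real^'n) set \<Rightarrow> ((real^'n) \<Rightarrow> real) set \<Rightarrow> (real^'n) set" where
  "pareto_set X g = (if g = {} then {} else {x \<in> X. \<not> (\<exists>y\<in>X. dominates g y x)})"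

definition weak_pareto_set :: "(real^'n) set \<Rightarrow> ((real^'n) \<Rightarrow> real) set \<Rightarrow> (real^'n) set" where
  "weak_pareto_set X g = {x \<in> X. \<forall>y\<in>X. \<exists>f\<in>g. f x \<le> f y}"

text \<open>Evaluation map of subproblem g: x maps to the tuple (f x) indexed by f in g,
  viewed as an element of R^g (functions vanishing outside g, product topology).\<close>
definition eval_map :: "((real^'n) \<Rightarrow> real) set \<Rightarrow> real^'n \<Rightarrow> (((real^'n) \<Rightarrow> real) \<Rightarrow> real)" where
  "eval_map g x = (\<lambda>f. if f \<in> g then f x else 0)"

text \<open>Standard simplex Delta^(k-1) inside R^k (coordinates 0..k-1); empty for k = 0.\<close>
definition std_simplex :: "nat \<Rightarrow> (nat \<Rightarrow> real) set" where
  "std_simplex k = {t. (\<forall>i. k \<le> i \<longrightarrow> t i = 0) \<and> (\<forall>i<k. 0 \<le> t i) \<and> (\<Sum>i<k. t i) = 1}"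

definition simple_problem :: "(real^'n) set \<Rightarrow> ((real^'n) \<Rightarrow> real) set \<Rightarrow> bool" where
  "simple_problem X fs \<longleftrightarrow>
     (\<forall>g. g \<subseteq> fs \<longrightarrow>
        pareto_set X g homeomorphic std_simplex (card g) \<and>
        embedding_map (top_of_set (pareto_set X g)) euclidean (eval_map g))"

end

theory Submission
  imports Defs
begin


lemma emb_inj_cont:
  assumes "embedding_map (top_of_set S) euclidean f"
  shows "inj_on f S" "continuous_map (top_of_set S) euclidean f"
proof -
  have h: "homeomorphic_map (top_of_set S) (subtopology euclidean (f ` topspace (top_of_set S))) f"
    using assms by (simp add: embedding_map_def)
  show "inj_on f S" using homeomorphic_imp_injective_map[OF h] by simp
  show "continuous_map (top_of_set S) euclidean f"
    using homeomorphic_imp_continuous_map[OF h] continuous_map_in_subtopology by blast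
qed

lemma pareto_subset: "pareto_set X g \<subseteq> X"
  by (auto simp: pareto_set_def)

lemma pareto_incl:
  fixes X :: "(real^'n) set"
  assumes inj: "inj_on (eval_map g) (pareto_set X g)" and gh: "g \<subseteq> h" and g: "g \<noteq> {}"
  shows "pareto_set X g \<subseteq> pareto_set X h"
proof
  fix q assume q: "q \<in> pareto_set X g"
  have h: "h \<noteq> {}" using g gh by auto
  have qX: "q \<in> X" and nd: "\<not> (\<exists>y\<in>X. dominates g y q)" using q g by (auto simp: pareto_set_def)
  have "\<not> dominates h y q" if yX: "y \<in> X" for y
  proof
    assume d: "dominates h y q"
    then have le: "\<forall>f\<in>g. f y \<le> f q" using gh by (auto simp: dominates_def)
    have eq: "\<forall>f\<in>g. f y = f q"
    proof (rule ccontr)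
      assume "\<not> (\<forall>f\<in>g. f y = f q)"
      then obtain f where "f \<in> g" "f y < f q" using le by force
      then have "dominates g y q" using le by (auto simp: dominates_def)
      then show False using nd yX by blast
    qed
    have "y \<in> pareto_set X g"
    proof -
      have "\<not> dominates g z y" if zX: "z \<in> X" for z
      proof
        assume "dominates g z y"
        then have "dominates g z q" using eq unfolding dominates_def by (metis)
        then show False using nd zX by blast
      qed
      then show ?thesis using yX g by (auto simp: pareto_set_def)
    qed
    moreover have "eval_map g y = eval_map g q" using eq by (auto simp: eval_map_def)
    ultimately have "y = q" using inj q by (meson inj_onD)
    then show False using d by (auto simp: dominates_def)
  qed
  then show "q \<in> pareto_set X h" using qX h by (auto simp: pareto_set_def)
qed

lemma simple_inj:
  assumes "simple_problem X fs" "g \<subseteq> fs"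
  shows "inj_on (eval_map g) (pareto_set X g)"
proof -
  have "embedding_map (top_of_set (pareto_set X g)) euclidean (eval_map g)"
    using assms by (auto simp: simple_problem_def)
  then show ?thesis by (rule emb_inj_cont)
qed

lemma simple_cont:
  assumes "simple_problem X fs" "g \<subseteq> fs" "f \<in> g"
  shows "continuous_on (pareto_set X g) f"
proof -
  have "embedding_map (top_of_set (pareto_set X g)) euclidean (eval_map g)"
    using assms by (auto simp: simple_problem_def)
  then have "continuous_map (top_of_set (pareto_set X g)) euclidean (eval_map g)"
    by (rule emb_inj_cont)
  then have "continuous_on (pareto_set X g) (eval_map g)"
    by (simp add: continuous_map_iff_continuous)
  then have "continuous_on (pareto_set X g) (\<lambda>x. eval_map g x f)"
    by (rule continuous_on_product_then_coordinatewise)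
  then show ?thesis using assms(3) by (simp add: eval_map_def)
qed

lemma compact_std_simplex: "compact (std_simplex k)"
proof -
  have c: "compact (PiE UNIV (\<lambda>i::nat. {0..1::real}))"
    using compactin_PiE[of "\<lambda>i. euclidean" UNIV "\<lambda>i. {0..1::real}"]
    by (simp add: euclidean_product_topology compactin_euclidean_iff)
  have cl: "closed (std_simplex k)"
  proof -
    have "std_simplex k = (\<Inter>i. {t. k \<le> i \<longrightarrow> t i = 0}) \<inter> (\<Inter>i. {t. i < k \<longrightarrow> 0 \<le> t i}) \<inter> {t. (\<Sum>i<k. t i) = 1}"
      by (auto simp: std_simplex_def)
    moreover have "closed {t::nat\<Rightarrow>real. k \<le> i \<longrightarrow> t i = 0}" for i
      by (cases "k \<le> i") (auto intro!: closed_Collect_eq continuous_on_product_coordinates)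
    moreover have "closed {t::nat\<Rightarrow>real. i < k \<longrightarrow> 0 \<le> t i}" for i
      by (cases "i < k") (auto intro!: closed_Collect_le continuous_on_product_coordinates)
    moreover have "closed {t::nat\<Rightarrow>real. (\<Sum>i<k. t i) = 1}"
      by (intro closed_Collect_eq continuous_intros continuous_on_product_coordinates)
    ultimately show ?thesis by (auto intro!: closed_Int closed_INT)
  qed
  have "std_simplex k \<subseteq> PiE UNIV (\<lambda>i::nat. {0..1::real})"
  proof
    fix t assume t: "t \<in> std_simplex k"
    have "t i \<in> {0..1}" for i
    proof (cases "i < k")
      case True
      have "t i \<le> (\<Sum>j<k. t j)"
        using t True by (intro member_le_sum) (auto simp: std_simplex_def)
      then show ?thesis using t True by (auto simp: std_simplex_def)
    next
      case False then show ?thesis using t by (auto simp: std_simplex_def)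
    qed
    then show "t \<in> PiE UNIV (\<lambda>i::nat. {0..1::real})" by auto
  qed
  then show ?thesis using c cl by (metis compact_Int_closed inf.absorb_iff2)
qed



lemma ext_simplex:
  fixes U :: "'a::{metric_space,second_countable_topology} set" and Q :: "'b::topological_space set"
  assumes Q: "Q homeomorphic std_simplex k" and k: "k \<ge> 1"
    and S: "closedin (top_of_set U) S" and cont: "continuous_on S \<psi>" and im: "\<psi> ` S \<subseteq> Q"
  obtains \<psi>' where "continuous_on U \<psi>'" "\<psi>' ` U \<subseteq> Q" "\<And>x. x \<in> S \<Longrightarrow> \<psi>' x = \<psi> x"
proof -
  obtain H H' where hom: "homeomorphism Q (std_simplex k) H H'"
    using Q by (auto simp: homeomorphic_def)
  have HH: "\<And>x. x \<in> Q \<Longrightarrow> H' (H x) = x" "H ` Q = std_simplex k" "continuous_on Q H"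
     "H' ` std_simplex k = Q" "continuous_on (std_simplex k) H'"
    using hom by (auto simp: homeomorphism_def)
  define \<psi>0 where "\<psi>0 = H \<circ> \<psi>"
  have c0: "continuous_on S \<psi>0" unfolding \<psi>0_def
    using cont im HH(3) continuous_on_compose continuous_on_subset by blast
  have i0: "\<psi>0 x \<in> std_simplex k" if "x \<in> S" for x
    using that im HH(2) unfolding \<psi>0_def by auto
  have coord01: "\<psi>0 x i \<in> {0..1}" if "x \<in> S" for x i
  proof (cases "i < k")
    case True
    have "\<psi>0 x i \<le> (\<Sum>j<k. \<psi>0 x j)"
      using i0[OF that] True by (intro member_le_sum) (auto simp: std_simplex_def)
    then show ?thesis using i0[OF that] True by (auto simp: std_simplex_def)
  next
    case False then show ?thesis using i0[OF that] by (auto simp: std_simplex_def)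
  qed
  have "\<forall>i. \<exists>g. continuous_on U g \<and> (\<forall>x\<in>S. g x = \<psi>0 x i) \<and> (\<forall>x\<in>U. g x \<in> {0..1::real})"
  proof
    fix i
    have ci: "continuous_on S (\<lambda>x. \<psi>0 x i)"
      using c0 by (rule continuous_on_product_then_coordinatewise)
    obtain g where "continuous_on U g" "\<And>x. x \<in> S \<Longrightarrow> g x = \<psi>0 x i"
        "\<And>x. x \<in> U \<Longrightarrow> g x \<in> cbox 0 (1::real)"
      using Tietze_closed_interval[OF ci S, of 0 1] coord01 by auto
    then show "\<exists>g. continuous_on U g \<and> (\<forall>x\<in>S. g x = \<psi>0 x i) \<and> (\<forall>x\<in>U. g x \<in> {0..1::real})"
      by auto
  qed
  then obtain E where E: "\<And>i. continuous_on U (E i)" "\<And>i x. x \<in> S \<Longrightarrow> E i x = \<psi>0 x i"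
      "\<And>i x. x \<in> U \<Longrightarrow> E i x \<in> {0..1::real}"
    by metis
  define D where "D x = (\<Sum>j<k. E j x)" for x
  define C where "C x = max 0 (1 - D x)" for x
  define V where "V x = (\<lambda>i. if i < k then (E i x + C x) / (D x + real k * C x) else 0)" for x
  have Dnn: "D x \<ge> 0" if "x \<in> U" for x
    unfolding D_def using E(3)[OF that] by (intro sum_nonneg) auto
  have den: "D x + real k * C x \<ge> 1" if "x \<in> U" for x
  proof (cases "D x \<ge> 1")
    case True then show ?thesis using k by (auto simp: C_def)
  next
    case False
    then have "C x = 1 - D x" by (auto simp: C_def)
    moreover have "real k * (1 - D x) \<ge> 1 - D x" using k False
      by (metis diff_ge_0_iff_ge less_le_not_le mult_le_cancel_right1 nle_le of_nat_1 of_nat_mono)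
    ultimately show ?thesis by simp
  qed
  have contV: "continuous_on U V"
    unfolding V_def
  proof (intro continuous_on_coordinatewise_then_product)
    fix i
    show "continuous_on U (\<lambda>x. if i < k then (E i x + C x) / (D x + real k * C x) else 0)"
    proof (cases "i < k")
      case True
      have cD: "continuous_on U D" unfolding D_def by (intro continuous_intros E(1))
      have cC: "continuous_on U C" unfolding C_def by (intro continuous_intros cD)
      show ?thesis using True
        by (simp, intro continuous_intros E(1) cC cD) (use den in force)
    qed simp
  qed
  have Vin: "V x \<in> std_simplex k" if "x \<in> U" for x
  proof -
    have pos: "D x + real k * C x > 0" using den[OF that] by simp
    have "(\<Sum>i<k. V x i) = (\<Sum>i<k. (E i x + C x)) / (D x + real k * C x)"
      unfolding V_def by (simp add: sum_divide_distrib)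
    also have "\<dots> = 1" using pos by (simp add: sum.distrib D_def)
    finally have "(\<Sum>i<k. V x i) = 1" .
    moreover have "\<forall>i<k. 0 \<le> V x i" unfolding V_def using E(3)[OF that] pos
      by (auto simp: C_def intro!: divide_nonneg_pos)
    ultimately show ?thesis by (auto simp: std_simplex_def V_def)
  qed
  have VS: "V x = \<psi>0 x" if "x \<in> S" for x
  proof -
    have xU: "x \<in> U" using S that closedin_subset by fastforce
    have "D x = 1" unfolding D_def using E(2)[OF that] i0[OF that] by (simp add: std_simplex_def)
    then have "C x = 0" by (simp add: C_def)
    show ?thesis
    proof
      fix i show "V x i = \<psi>0 x i"
        using \<open>D x = 1\<close> \<open>C x = 0\<close> E(2)[OF that] i0[OF that] by (auto simp: V_def std_simplex_def)
    qed
  qed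
  show ?thesis
  proof (rule that[of "H' \<circ> V"])
    show "continuous_on U (H' \<circ> V)"
      using contV HH(5) Vin by (meson continuous_on_compose continuous_on_subset image_subset_iff)
    show "(H' \<circ> V) ` U \<subseteq> Q" using Vin HH(4) by auto
    fix x assume "x \<in> S"
    then show "(H' \<circ> V) x = \<psi> x" using VS HH(1) im by (auto simp: \<psi>0_def)
  qed
qed



lemma fpp_simplex:
  fixes P :: "(real^'n) set"
  assumes hom: "P homeomorphic std_simplex m" and m: "m \<ge> 1"
    and cF: "continuous_on (std_simplex m) F" and iF: "F ` std_simplex m \<subseteq> std_simplex m"
  shows "\<exists>t\<in>std_simplex m. F t = t"
proof -
  have cP: "compact P"
    using hom compact_std_simplex homeomorphic_compactness by blast
  obtain R where R0: "R > 0" "P \<subseteq> ball 0 R"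
    using bounded_subset_ballD[OF compact_imp_bounded[OF cP], of 0] by blast
  have R: "R > 0" "P \<subseteq> cball 0 R" using R0 ball_subset_cball by blast+
  have clP: "closedin (top_of_set (cball 0 R)) P"
    by (rule closed_subset[OF R(2) compact_imp_closed[OF cP]])
  obtain r where r: "continuous_on (cball 0 R) r" "r ` cball 0 R \<subseteq> P" "\<And>x. x \<in> P \<Longrightarrow> r x = x"
  proof -
    have i: "(\<lambda>x. x) ` P \<subseteq> P" by simp
    show ?thesis using ext_simplex[OF hom m clP continuous_on_id i] that by blast
  qed
  have ret: "P retract_of cball 0 R"
    unfolding retract_of_def retraction_def
    using r R(2) by (intro exI[of _ r]) (auto simp: Pi_iff)
  have FPP: "\<forall>g. continuous_on P g \<and> g \<in> P \<rightarrow> P \<longrightarrow> (\<exists>y\<in>P. g y = y)"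
  proof (intro allI impI)
    fix g assume g: "continuous_on P g \<and> g \<in> P \<rightarrow> P"
    have FPB: "\<exists>x\<in>cball 0 R. f x = x" if "continuous_on (cball 0 R) f" "f \<in> cball 0 R \<rightarrow> cball 0 R"
      for f :: "real^'n \<Rightarrow> real^'n"
      using brouwer_ball[OF R(1) that] by blast
    obtain y where "y \<in> P" "g y = y"
      using retract_fixpoint_property[OF ret FPB] g by blast
    then show "\<exists>y\<in>P. g y = y" by blast
  qed
  then have "\<forall>g. continuous_on (std_simplex m) g \<and> g \<in> std_simplex m \<rightarrow> std_simplex m \<longrightarrow> (\<exists>y\<in>std_simplex m. g y = y)"
    using homeomorphic_fixpoint_property[OF hom] by blast
  then show ?thesis using cF iF by (auto simp: image_subset_iff_funcset)
qed



definition face :: "nat \<Rightarrow> nat set \<Rightarrow> (nat \<Rightarrow> real) set" where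
  "face m J = {t \<in> std_simplex m. \<forall>i. i \<notin> J \<longrightarrow> t i = 0}"

definition supp :: "nat \<Rightarrow> (nat \<Rightarrow> real) \<Rightarrow> nat set" where
  "supp m t = {i. i < m \<and> t i \<noteq> 0}"

lemma closed_face: "closed (face m J)"
proof -
  have "face m J = std_simplex m \<inter> (\<Inter>i. {t. i \<notin> J \<longrightarrow> t i = 0})"
    by (auto simp: face_def)
  moreover have "closed {t::nat\<Rightarrow>real. i \<notin> J \<longrightarrow> t i = 0}" for i
    by (cases "i \<in> J") (auto intro!: closed_Collect_eq continuous_on_product_coordinates)
  ultimately show ?thesis
    by (simp add: closed_Int closed_INT compact_imp_closed[OF compact_std_simplex])
qed

lemma face_empty: "face m {} = {}"
  by (auto simp: face_def std_simplex_def)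

lemma face_mono: "J \<subseteq> K \<Longrightarrow> face m J \<subseteq> face m K"
  by (auto simp: face_def)

lemma supp_sub: "t \<in> face m J \<Longrightarrow> supp m t \<subseteq> J"
  by (auto simp: face_def supp_def)

lemma face_full: "face m {..<m} = std_simplex m"
  by (auto simp: face_def std_simplex_def)

lemma skeleton:
  fixes Pf :: "nat set \<Rightarrow> 'b::topological_space set"
  assumes hom: "\<And>J. J \<subseteq> {..<m} \<Longrightarrow> J \<noteq> {} \<Longrightarrow> Pf J homeomorphic std_simplex (card J)"
    and mono: "\<And>J K. J \<subseteq> K \<Longrightarrow> K \<subseteq> {..<m} \<Longrightarrow> J \<noteq> {} \<Longrightarrow> Pf J \<subseteq> Pf K"
  shows "\<exists>\<Phi>. \<forall>J. J \<subseteq> {..<m} \<and> J \<noteq> {} \<and> card J \<le> k \<longrightarrow>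
            continuous_on (face m J) \<Phi> \<and> \<Phi> ` face m J \<subseteq> Pf J"
proof (induction k)
  case 0
  show ?case
  proof (intro exI allI impI)
    fix J :: "nat set" assume J: "J \<subseteq> {..<m} \<and> J \<noteq> {} \<and> card J \<le> 0"
    then have "finite J" using finite_subset[of J "{..<m}"] by simp
    then have "J = {}" using J by simp
    then show "continuous_on (face m J) (\<lambda>x. undefined) \<and> (\<lambda>x. undefined) ` face m J \<subseteq> Pf J"
      using J by blast
  qed
next
  case (Suc k)
  then obtain \<Phi> where \<Phi>0: "\<forall>J. J \<subseteq> {..<m} \<and> J \<noteq> {} \<and> card J \<le> k \<longrightarrow>
            continuous_on (face m J) \<Phi> \<and> \<Phi> ` face m J \<subseteq> Pf J" by (elim exE)
  have \<Phi>: "\<And>J. J \<subseteq> {..<m} \<Longrightarrow> J \<noteq> {} \<Longrightarrow> card J \<le> k \<Longrightarrow>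
            continuous_on (face m J) \<Phi> \<and> \<Phi> ` face m J \<subseteq> Pf J" using \<Phi>0 by simp
  define B where "B J = {t \<in> face m J. \<exists>i\<in>J. t i = 0}" for J
  have ex: "\<exists>\<Psi>. J \<subseteq> {..<m} \<and> card J = Suc k \<longrightarrow>
      continuous_on (face m J) \<Psi> \<and> \<Psi> ` face m J \<subseteq> Pf J \<and> (\<forall>t\<in>B J. \<Psi> t = \<Phi> t)" for J
  proof (cases "J \<subseteq> {..<m} \<and> card J = Suc k")
    case True
    then have Jm: "J \<subseteq> {..<m}" and cJ: "card J = Suc k" by auto
    have fJ: "finite J" using Jm finite_subset[of J "{..<m}"] by simp
    have Jne: "J \<noteq> {}" using cJ by auto
    have BU: "B J = (\<Union>i\<in>J. face m (J - {i}))"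
      by (auto simp: B_def face_def)
    have cB: "continuous_on (B J) \<Phi>"
      unfolding BU
    proof (rule continuous_on_closed_Union)
      show "finite J" by fact
      fix i assume i: "i \<in> J"
      show "closed (face m (J - {i}))" by (rule closed_face)
      show "continuous_on (face m (J - {i})) \<Phi>"
      proof (cases "J - {i} = {}")
        case True then have "face m (J - {i}) = {}" by (metis face_empty)
        then show ?thesis by simp
      next
        case False
        have "card (J - {i}) = k" using cJ i fJ by simp
        then show ?thesis using \<Phi>[of "J - {i}"] Jm False by auto
      qed
    qed
    have iB: "\<Phi> ` B J \<subseteq> Pf J"
    proof
      fix y assume "y \<in> \<Phi> ` B J"
      then obtain i t where i: "i \<in> J" and t: "t \<in> face m (J - {i})" and y: "y = \<Phi> t"
        unfolding BU by blast
      have ne: "J - {i} \<noteq> {}" using t face_empty by fastforce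
      have "card (J - {i}) = k" using cJ i fJ by simp
      then have "y \<in> Pf (J - {i})" using \<Phi>[of "J - {i}"] Jm ne t y by auto
      then show "y \<in> Pf J" using mono[of "J - {i}" J] Jm ne by auto
    qed
    have clB: "closedin (top_of_set (face m J)) (B J)"
    proof -
      have "closed (B J)" unfolding BU using fJ closed_face by (intro closed_UN) auto
      moreover have "B J \<subseteq> face m J" by (auto simp: B_def)
      ultimately show ?thesis by (simp add: closed_subset)
    qed
    have k1: "card J \<ge> 1" using cJ by simp
    obtain \<Psi> where "continuous_on (face m J) \<Psi>" "\<Psi> ` face m J \<subseteq> Pf J" "\<And>t. t \<in> B J \<Longrightarrow> \<Psi> t = \<Phi> t"
      using ext_simplex[OF hom[OF Jm Jne] k1 clB cB iB] by blast
    then show ?thesis by blast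
  qed auto
  have "\<forall>J. \<exists>\<Psi>. J \<subseteq> {..<m} \<and> card J = Suc k \<longrightarrow>
      continuous_on (face m J) \<Psi> \<and> \<Psi> ` face m J \<subseteq> Pf J \<and> (\<forall>t\<in>B J. \<Psi> t = \<Phi> t)"
    using ex by blast
  from choice[OF this] obtain \<Psi> where \<Psi>0: "\<forall>J. J \<subseteq> {..<m} \<and> card J = Suc k \<longrightarrow>
      continuous_on (face m J) (\<Psi> J) \<and> \<Psi> J ` face m J \<subseteq> Pf J \<and> (\<forall>t\<in>B J. \<Psi> J t = \<Phi> t)"
    by blast
  have \<Psi>: "\<And>J. J \<subseteq> {..<m} \<Longrightarrow> card J = Suc k \<Longrightarrow>
      continuous_on (face m J) (\<Psi> J) \<and> \<Psi> J ` face m J \<subseteq> Pf J \<and> (\<forall>t\<in>B J. \<Psi> J t = \<Phi> t)"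
    using \<Psi>0 by blast
  define \<Phi>' where "\<Phi>' t = (if card (supp m t) = Suc k then \<Psi> (supp m t) t else \<Phi> t)" for t
  show ?case
  proof (intro exI[of _ \<Phi>'] allI impI)
    fix J assume J: "J \<subseteq> {..<m} \<and> J \<noteq> {} \<and> card J \<le> Suc k"
    have fJ: "finite J" using J finite_subset[of J "{..<m}"] by simp
    show "continuous_on (face m J) \<Phi>' \<and> \<Phi>' ` face m J \<subseteq> Pf J"
    proof (cases "card J \<le> k")
      case True
      have eq: "\<Phi>' t = \<Phi> t" if "t \<in> face m J" for t
      proof -
        have "card (supp m t) \<le> card J" using supp_sub[OF that] fJ by (simp add: card_mono)
        then show ?thesis using True by (auto simp: \<Phi>'_def)
      qed
      show ?thesis using \<Phi>[of J] J True eq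
        by (auto simp: continuous_on_cong[OF refl eq] image_subset_iff)
    next
      case False
      then have cJ: "card J = Suc k" using J by simp
      have eq: "\<Phi>' t = \<Psi> J t" if t: "t \<in> face m J" for t
      proof (cases "card (supp m t) = Suc k")
        case True
        then have "supp m t = J" using supp_sub[OF t] fJ cJ by (metis card_subset_eq)
        then show ?thesis using True by (simp add: \<Phi>'_def)
      next
        case False
        then have "supp m t \<noteq> J" using cJ by auto
        then obtain i where "i \<in> J" "i \<notin> supp m t" using supp_sub[OF t] by blast
        then have "t i = 0" using J by (auto simp: supp_def)
        then have "t \<in> B J" using t \<open>i \<in> J\<close> by (auto simp: B_def)
        then show ?thesis using False \<Psi>[of J] J cJ by (auto simp: \<Phi>'_def)
      qed
      show ?thesis using \<Psi>[of J] J cJ eq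
        by (auto simp: continuous_on_cong[OF refl eq] image_subset_iff)
    qed
  qed
qed



lemma uniform_pos:
  fixes g :: "nat \<Rightarrow> 'a::topological_space \<Rightarrow> real"
  assumes S: "compact S" and J: "finite J" and cg: "\<And>i. i \<in> J \<Longrightarrow> continuous_on S (g i)"
    and pos: "\<And>q. q \<in> S \<Longrightarrow> \<exists>i\<in>J. g i q > 0"
  shows "\<exists>\<epsilon>>0. \<forall>q\<in>S. \<exists>i\<in>J. g i q \<ge> \<epsilon>"
proof (cases "S = {}")
  case True then show ?thesis by (intro exI[of _ 1]) auto
next
  case False
  define h where "h q = (\<Sum>i\<in>J. max 0 (g i q))" for q
  have ch: "continuous_on S h" unfolding h_def
    by (intro continuous_on_sum continuous_on_max continuous_on_const cg)
  obtain q0 where q0: "q0 \<in> S" "\<And>y. y \<in> S \<Longrightarrow> h q0 \<le> h y"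
    using continuous_attains_inf[OF S False ch] by blast
  have hpos: "h q > 0" if qS: "q \<in> S" for q
  proof -
    obtain i where "i \<in> J" "g i q > 0" using pos[OF qS] by blast
    then show ?thesis unfolding h_def using J by (intro sum_pos2[of J i]) auto
  qed
  have Jne: "J \<noteq> {}" using pos q0(1) by blast
  then have cJ: "card J > 0" using J by (simp add: card_gt_0_iff)
  define \<epsilon> where "\<epsilon> = h q0 / real (card J)"
  have ep: "\<epsilon> > 0" unfolding \<epsilon>_def using hpos[OF q0(1)] cJ by simp
  show ?thesis
  proof (intro exI[of _ \<epsilon>] conjI ballI)
    show "\<epsilon> > 0" by fact
    fix q assume q: "q \<in> S"
    show "\<exists>i\<in>J. \<epsilon> \<le> g i q"
    proof (rule ccontr)
      assume "\<not> (\<exists>i\<in>J. \<epsilon> \<le> g i q)"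
      then have lt: "\<And>i. i \<in> J \<Longrightarrow> max 0 (g i q) < \<epsilon>" using ep by force
      have "h q < (\<Sum>i\<in>J. \<epsilon>)" unfolding h_def using J Jne lt by (intro sum_strict_mono) auto
      also have "\<dots> = h q0" using cJ by (simp add: \<epsilon>_def)
      finally show False using q0(2)[OF q] by simp
    qed
  qed
qed

lemma uniform_pos_family:
  fixes g :: "nat \<Rightarrow> 'a \<Rightarrow> real"
  assumes "finite \<J>" "\<And>J. J \<in> \<J> \<Longrightarrow> \<exists>\<epsilon>>0. \<forall>q\<in>S J. \<exists>i\<in>J. g i q \<ge> \<epsilon>"
  shows "\<exists>\<epsilon>>0. \<forall>J\<in>\<J>. \<forall>q\<in>S J. \<exists>i\<in>J. g i q \<ge> \<epsilon>"
  using assms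
proof (induction \<J> rule: finite_induct)
  case empty then show ?case by (intro exI[of _ 1]) auto
next
  case (insert J0 \<J>)
  obtain e1 where e1: "e1 > 0" "\<forall>J\<in>\<J>. \<forall>q\<in>S J. \<exists>i\<in>J. g i q \<ge> e1" using insert by blast
  obtain e2 where e2: "e2 > 0" "\<forall>q\<in>S J0. \<exists>i\<in>J0. g i q \<ge> e2" using insert.prems by blast
  show ?case
  proof (intro exI[of _ "min e1 e2"] conjI ballI)
    show "min e1 e2 > 0" using e1 e2 by simp
    fix J q assume J: "J \<in> insert J0 \<J>" and q: "q \<in> S J"
    show "\<exists>i\<in>J. min e1 e2 \<le> g i q"
    proof (cases "J = J0")
      case True
      then obtain i where "i \<in> J" "g i q \<ge> e2" using e2 q by blast
      then show ?thesis by (intro bexI[of _ i]) auto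
    next
      case False
      then have "J \<in> \<J>" using J by simp
      then obtain i where "i \<in> J" "g i q \<ge> e1" using e1 q by blast
      then show ?thesis by (intro bexI[of _ i]) auto
    qed
  qed
qed



theorem proposition2:
  fixes X :: "(real^'n) set" and fs :: "((real^'n) \<Rightarrow> real) set"
  assumes "finite fs"
    and "simple_problem X fs"
  shows "weak_pareto_set X fs = pareto_set X fs"
proof (cases "fs = {}")
  case True
  then show ?thesis by (auto simp: weak_pareto_set_def pareto_set_def)
next
  case fsne: False
  note fin = assms(1) and simp = assms(2)
  let ?P = "pareto_set X fs"
  have sub1: "?P \<subseteq> weak_pareto_set X fs"
  proof
    fix x assume x: "x \<in> ?P"
    then have xX: "x \<in> X" and nd: "\<And>y. y \<in> X \<Longrightarrow> \<not> dominates fs y x"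
      using fsne by (auto simp: pareto_set_def)
    have "\<exists>f\<in>fs. f x \<le> f y" if yX: "y \<in> X" for y
    proof (rule ccontr)
      assume "\<not> (\<exists>f\<in>fs. f x \<le> f y)"
      then have "\<forall>f\<in>fs. f y < f x" by auto
      then have "dominates fs y x" using fsne by (force simp: dominates_def)
      then show False using nd yX by blast
    qed
    then show "x \<in> weak_pareto_set X fs" using xX by (auto simp: weak_pareto_set_def)
  qed
  have sub2: "weak_pareto_set X fs \<subseteq> ?P"
  proof
    fix x assume xw: "x \<in> weak_pareto_set X fs"
    then have xX: "x \<in> X" and weak: "\<And>y. y \<in> X \<Longrightarrow> \<exists>f\<in>fs. f x \<le> f y"
      by (auto simp: weak_pareto_set_def)
    show "x \<in> ?P"
    proof (rule ccontr)
      assume xnP: "x \<notin> ?P"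
      define m where "m = card fs"
      have m1: "m \<ge> 1" using fin fsne by (simp add: m_def Suc_le_eq card_gt_0_iff)
      obtain e where e: "bij_betw e {..<m} fs"
        using ex_bij_betw_nat_finite[OF fin] by (auto simp: m_def atLeast0LessThan)
      have eim: "e ` {..<m} = fs" using e by (simp add: bij_betw_def)
      have einj: "inj_on e {..<m}" using e by (simp add: bij_betw_def)
      define Pf where "Pf J = pareto_set X (e ` J)" for J
      have esub: "e ` J \<subseteq> fs" if "J \<subseteq> {..<m}" for J using that eim by blast
      have ecard: "card (e ` J) = card J" if "J \<subseteq> {..<m}" for J
        using that einj by (meson card_image inj_on_subset)
      have hom: "Pf J homeomorphic std_simplex (card J)" if "J \<subseteq> {..<m}" "J \<noteq> {}" for J
        using simp esub[OF that(1)] ecard[OF that(1)] unfolding simple_problem_def Pf_def by metis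
      have mono: "Pf J \<subseteq> Pf K" if "J \<subseteq> K" "K \<subseteq> {..<m}" "J \<noteq> {}" for J K
        unfolding Pf_def
      proof (rule pareto_incl)
        show "inj_on (eval_map (e ` J)) (pareto_set X (e ` J))"
          using simple_inj[OF simp esub] that by blast
        show "e ` J \<subseteq> e ` K" using that by blast
        show "e ` J \<noteq> {}" using that by blast
      qed
      have Pfull: "Pf {..<m} = ?P" unfolding Pf_def eim ..
      obtain \<Phi> where \<Phi>0: "\<forall>J. J \<subseteq> {..<m} \<and> J \<noteq> {} \<and> card J \<le> m \<longrightarrow>
            continuous_on (face m J) \<Phi> \<and> \<Phi> ` face m J \<subseteq> Pf J"
      proof -
        have "\<exists>\<Phi>. \<forall>J. J \<subseteq> {..<m} \<and> J \<noteq> {} \<and> card J \<le> m \<longrightarrow>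
            continuous_on (face m J) \<Phi> \<and> \<Phi> ` face m J \<subseteq> Pf J"
        proof (rule skeleton)
          fix J assume "J \<subseteq> {..<m}" "J \<noteq> {}"
          then show "Pf J homeomorphic std_simplex (card J)" by (rule hom)
        next
          fix J K assume "J \<subseteq> K" "K \<subseteq> {..<m}" "J \<noteq> {}"
          then show "Pf J \<subseteq> Pf K" by (rule mono)
        qed
        then show ?thesis using that by blast
      qed
      have \<Phi>: "continuous_on (face m J) \<Phi> \<and> \<Phi> ` face m J \<subseteq> Pf J" if "J \<subseteq> {..<m}" "J \<noteq> {}" for J
      proof -
        have "card J \<le> m" using that(1) card_mono[of "{..<m}" J] by simp
        then show ?thesis using \<Phi>0 that by blast
      qed
      have \<Phi>full: "continuous_on (std_simplex m) \<Phi>" "\<Phi> ` std_simplex m \<subseteq> ?P"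
      proof -
        have "0 \<in> {..<m}" using m1 by simp
        then have ne: "{..<m} \<noteq> {}" by blast
        show "continuous_on (std_simplex m) \<Phi>" "\<Phi> ` std_simplex m \<subseteq> ?P"
          using \<Phi>[OF subset_refl ne] face_full[of m] Pfull by auto
      qed
      have ce: "continuous_on ?P (e i)" if "i < m" for i
        using simple_cont[OF simp subset_refl] eim that by blast
      have strict: "\<exists>i\<in>J. e i q < e i x" if J: "J \<subseteq> {..<m}" "J \<noteq> {}" and q: "q \<in> Pf J" for J q
      proof (rule ccontr)
        assume "\<not> (\<exists>i\<in>J. e i q < e i x)"
        then have le: "\<forall>f\<in>e ` J. f x \<le> f q" by force
        have gne: "e ` J \<noteq> {}" using J by blast
        have qP: "q \<in> X" "\<And>y. y \<in> X \<Longrightarrow> \<not> dominates (e ` J) y q"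
          using q gne by (auto simp: Pf_def pareto_set_def)
        have eq: "\<forall>f\<in>e ` J. f x = f q"
        proof (rule ccontr)
          assume "\<not> (\<forall>f\<in>e ` J. f x = f q)"
          then obtain f where "f \<in> e ` J" "f x < f q" using le by force
          then have "dominates (e ` J) x q" using le by (auto simp: dominates_def)
          then show False using qP(2) xX by blast
        qed
        have "x \<in> Pf J"
        proof -
          have "\<not> dominates (e ` J) z x" if zX: "z \<in> X" for z
          proof
            assume "dominates (e ` J) z x"
            then have "dominates (e ` J) z q" using eq unfolding dominates_def by metis
            then show False using qP(2) zX by blast
          qed
          then show ?thesis using xX gne by (auto simp: Pf_def pareto_set_def)
        qed
        then have "x \<in> ?P" using mono[of J "{..<m}"] J Pfull by blast
        then show False using xnP by blast
      qed
      define \<J> where "\<J> = {J. J \<subseteq> {..<m} \<and> J \<noteq> {}}"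
      have finJ: "finite \<J>" unfolding \<J>_def by (rule finite_subset[of _ "Pow {..<m}"]) auto
      obtain \<epsilon> where ep: "\<epsilon> > 0" "\<forall>J\<in>\<J>. \<forall>q\<in>Pf J. \<exists>i\<in>J. (\<lambda>i q. e i x - e i q) i q \<ge> \<epsilon>"
      proof -
        have "\<exists>\<epsilon>>0. \<forall>J\<in>\<J>. \<forall>q\<in>Pf J. \<exists>i\<in>J. (\<lambda>i q. e i x - e i q) i q \<ge> \<epsilon>"
        proof (rule uniform_pos_family[OF finJ])
          fix J assume "J \<in> \<J>"
          then have J: "J \<subseteq> {..<m}" "J \<noteq> {}" by (auto simp: \<J>_def)
          have cP: "compact (Pf J)"
            using hom[OF J] compact_std_simplex homeomorphic_compactness by blast
          have fJ: "finite J" using J(1) finite_subset[of J "{..<m}"] by simp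
          have PJP: "Pf J \<subseteq> ?P" using mono[of J "{..<m}"] J Pfull by simp
          show "\<exists>\<epsilon>>0. \<forall>q\<in>Pf J. \<exists>i\<in>J. (\<lambda>i q. e i x - e i q) i q \<ge> \<epsilon>"
          proof (rule uniform_pos[OF cP fJ])
            fix i assume "i \<in> J"
            then have "i < m" using J(1) by blast
            then have "continuous_on (Pf J) (e i)" using continuous_on_subset[OF ce PJP] by blast
            then show "continuous_on (Pf J) ((\<lambda>i q. e i x - e i q) i)"
              by (intro continuous_intros) simp
          next
            fix q assume "q \<in> Pf J"
            then show "\<exists>i\<in>J. (\<lambda>i q. e i x - e i q) i q > 0" using strict[OF J] by force
          qed
        qed
        then show ?thesis using that by blast
      qed
      have face_eps: "\<exists>i\<in>J. e i q \<le> e i x - \<epsilon>" if FJ: "J \<subseteq> {..<m}" "J \<noteq> {}" "q \<in> Pf J" for J q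
      proof -
        have "J \<in> \<J>" using FJ(1,2) by (simp add: \<J>_def)
        then obtain i where "i \<in> J" "\<epsilon> \<le> e i x - e i q" using ep(2) FJ(3) by auto
        then show ?thesis by (intro bexI[of _ i]) auto
      qed
      define \<sigma> where "\<sigma> i q = max 0 (e i q - e i x + \<epsilon>)" for i q
      define F where "F s = (\<lambda>i. if i < m then \<sigma> i (\<Phi> s) / (\<Sum>j<m. \<sigma> j (\<Phi> s)) else 0)" for s
      have \<sigma>nn: "\<sigma> i q \<ge> 0" for i q by (simp add: \<sigma>_def)
      have den: "(\<Sum>j<m. \<sigma> j q) > 0" if "q \<in> ?P" for q
      proof -
        have "q \<in> X" using that pareto_subset by blast
        then obtain f where f: "f \<in> fs" "f x \<le> f q" using weak by blast
        then obtain j where j: "j < m" "e j = f" using eim by force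
        have "\<sigma> j q > 0" using f j ep(1) by (simp add: \<sigma>_def)
        then show ?thesis using j by (intro sum_pos2[of _ j]) (auto simp: \<sigma>nn)
      qed
      have cF: "continuous_on (std_simplex m) F"
        unfolding F_def
      proof (intro continuous_on_coordinatewise_then_product)
        fix i
        have c\<sigma>: "continuous_on (std_simplex m) (\<lambda>s. \<sigma> j (\<Phi> s))" if "j < m" for j
        proof -
          have "continuous_on (std_simplex m) (\<lambda>s. e j (\<Phi> s))"
            using continuous_on_compose2[OF ce[OF that] \<Phi>full(1) \<Phi>full(2)] .
          then show ?thesis unfolding \<sigma>_def by (intro continuous_intros)
        qed
        show "continuous_on (std_simplex m) (\<lambda>s. if i < m then \<sigma> i (\<Phi> s) / (\<Sum>j<m. \<sigma> j (\<Phi> s)) else 0)"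
        proof (cases "i < m")
          case True
          have nz: "\<forall>s\<in>std_simplex m. (\<Sum>j<m. \<sigma> j (\<Phi> s)) \<noteq> 0"
          proof
            fix s assume "s \<in> std_simplex m"
            then have "\<Phi> s \<in> ?P" using \<Phi>full(2) by blast
            then show "(\<Sum>j<m. \<sigma> j (\<Phi> s)) \<noteq> 0" using den by force
          qed
          have cs: "continuous_on (std_simplex m) (\<lambda>s. \<Sum>j<m. \<sigma> j (\<Phi> s))"
            by (intro continuous_on_sum c\<sigma>) simp
          have "continuous_on (std_simplex m) (\<lambda>s. \<sigma> i (\<Phi> s) / (\<Sum>j<m. \<sigma> j (\<Phi> s)))"
            by (rule continuous_on_divide[OF c\<sigma>[OF True] cs nz])
          then show ?thesis using True by simp
        qed simp
      qed
      have iF: "F ` std_simplex m \<subseteq> std_simplex m"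
      proof
        fix y assume "y \<in> F ` std_simplex m"
        then obtain s where s: "s \<in> std_simplex m" "y = F s" by blast
        have q: "\<Phi> s \<in> ?P" using s \<Phi>full(2) by blast
        have d: "(\<Sum>j<m. \<sigma> j (\<Phi> s)) > 0" using den[OF q] .
        have "(\<Sum>i<m. F s i) = (\<Sum>i<m. \<sigma> i (\<Phi> s) / (\<Sum>j<m. \<sigma> j (\<Phi> s)))"
          unfolding F_def by (intro sum.cong) auto
        also have "\<dots> = (\<Sum>i<m. \<sigma> i (\<Phi> s)) / (\<Sum>j<m. \<sigma> j (\<Phi> s))"
          by (rule sum_divide_distrib[symmetric])
        also have "\<dots> = 1" using d by simp
        finally have "(\<Sum>i<m. F s i) = 1" .
        moreover have "\<forall>i<m. 0 \<le> F s i" unfolding F_def using d \<sigma>nn by simp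
        ultimately show "y \<in> std_simplex m" using s by (auto simp: std_simplex_def F_def)
      qed
      have homP: "?P homeomorphic std_simplex m"
      proof -
        have "0 \<in> {..<m}" using m1 by simp
        then have ne: "{..<m} \<noteq> {}" by blast
        have "Pf {..<m} homeomorphic std_simplex (card {..<m})" by (rule hom[OF subset_refl ne])
        then show ?thesis using Pfull by simp
      qed
      obtain s where s: "s \<in> std_simplex m" "F s = s"
        using fpp_simplex[OF homP m1 cF iF] by blast
      define q where "q = \<Phi> s"
      have qP: "q \<in> ?P" using s \<Phi>full(2) by (auto simp: q_def)
      have d: "(\<Sum>j<m. \<sigma> j q) > 0" using den[OF qP] .
      define J where "J = supp m s"
      have Jm: "J \<subseteq> {..<m}" by (auto simp: J_def supp_def)
      have sJ: "s \<in> face m J" using s(1) by (auto simp: face_def J_def supp_def std_simplex_def)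
      have Jne: "J \<noteq> {}"
      proof
        assume "J = {}"
        then show False using sJ face_empty[of m] by simp
      qed
      have qJ: "q \<in> Pf J" using \<Phi>[OF Jm Jne] sJ by (auto simp: q_def)
      obtain i where i: "i \<in> J" "e i q \<le> e i x - \<epsilon>" using face_eps[OF Jm Jne qJ] by blast
      have "\<sigma> i q = 0" using i(2) by (simp add: \<sigma>_def)
      moreover have "i < m" using i(1) Jm by blast
      ultimately have "F s i = 0" by (simp add: F_def q_def[symmetric])
      then have "s i = 0" using s(2) by simp
      then show False using i(1) by (simp add: J_def supp_def)
    qed
  qed
  show ?thesis using sub1 sub2 by blast
qed

end
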